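(* Let $\Gamma((r^S)_{S\subseteq I})$ be a quitting game satisfying $r^i_i=0$ for all $i\in I$. If there is a normal player $i\in I_*$ such that $r^i\in\mathbb R^N_{\ge0}$, then for every $\varepsilon>0$ the game has a stationary $\varepsilon$-equilibrium.
   Context: A quitting game $\Gamma((r^S)_{S\subseteq I})$: finite player set $I=[N]$, vectors $r^S\in[-1,1]^N$ for all $S\subseteq I$; at each stage $t\in\mathbb N$ each player chooses to continue or quit; with $t^*$ the first stage at which some player quits and $S^*$ the set of players quitting then ($S^*=\emptyset$ if nobody ever quits), the payoff is $r^{S^*}$. Write $r^i:=r^{\{i\}}$. A (behavior) strategy of player $i$ is a sequence $x_i=(x_i^t)_{t\in\mathbb N}\subset[0,1]$, $x_i^t$ being the probability of quitting at stage $t$ if nobody quit before; it is stationary if $x_i^t$ does not depend on $t$. $\gamma(x):=\mathbb E_x[r^{S^*}]$. A profile $x$ is an $\varepsilon$-equilibrium if $\gamma_i(x)\ge\gamma_i(x_i',x_{-i})-\varepsilon$ for all $i$ and all strategies $x_i'$. Normal players: $I_0:=I$, $I_{l+1}:=\{i\in I_l:\ \exists j\in I_l,\ j\neq i,\ r^j_i\le0\}$, and $I_*:=\bigcap_{l}I_l$. Players in $I_*$ are normal, the others abnormal. *)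

theory Defs
  imports "HOL-Analysis.Analysis"
begin

text \<open>Payoff vectors: r S i is the payoff of player i when exactly the set S quits first
  (S = {} means nobody ever quits).  A strategy profile x assigns to player j and
  stage t the probability x j t of quitting at stage t (if nobody quit before).\<close>

definition players :: "nat \<Rightarrow> nat set" where
  "players N = {..<N}"

definition valid_game :: "nat \<Rightarrow> (nat set \<Rightarrow> nat \<Rightarrow> real) \<Rightarrow> bool" where
  "valid_game N r \<longleftrightarrow> (\<forall>S\<subseteq>players N. \<forall>i\<in>players N. \<bar>r S i\<bar> \<le> 1)"

definition is_strategy :: "(nat \<Rightarrow> real) \<Rightarrow> bool" where
  "is_strategy y \<longleftrightarrow> (\<forall>t. 0 \<le> y t \<and> y t \<le> 1)"

definition is_profile :: "nat \<Rightarrow> (nat \<Rightarrow> nat \<Rightarrow> real) \<Rightarrow> bool" where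
  "is_profile N x \<longleftrightarrow> (\<forall>j\<in>players N. is_strategy (x j))"

definition stationary_profile :: "nat \<Rightarrow> (nat \<Rightarrow> nat \<Rightarrow> real) \<Rightarrow> bool" where
  "stationary_profile N x \<longleftrightarrow> (\<forall>j\<in>players N. \<forall>t. x j t = x j 0)"

definition no_quit_before :: "nat \<Rightarrow> (nat \<Rightarrow> nat \<Rightarrow> real) \<Rightarrow> nat \<Rightarrow> real" where
  "no_quit_before N x t = (\<Prod>s<t. \<Prod>j\<in>players N. (1 - x j s))"

definition quit_exactly :: "nat \<Rightarrow> (nat \<Rightarrow> nat \<Rightarrow> real) \<Rightarrow> nat set \<Rightarrow> nat \<Rightarrow> real" where
  "quit_exactly N x S t = (\<Prod>j\<in>S. x j t) * (\<Prod>j\<in>players N - S. (1 - x j t))"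

definition payoff :: "nat \<Rightarrow> (nat set \<Rightarrow> nat \<Rightarrow> real) \<Rightarrow> (nat \<Rightarrow> nat \<Rightarrow> real) \<Rightarrow> nat \<Rightarrow> real" where
  "payoff N r x i =
     (\<Sum>t. no_quit_before N x t * (\<Sum>S\<in>Pow (players N) - {{}}. quit_exactly N x S t * r S i))
     + lim (\<lambda>t. no_quit_before N x t) * r {} i"

definition eps_equilibrium :: "nat \<Rightarrow> (nat set \<Rightarrow> nat \<Rightarrow> real) \<Rightarrow> real \<Rightarrow> (nat \<Rightarrow> nat \<Rightarrow> real) \<Rightarrow> bool" where
  "eps_equilibrium N r \<epsilon> x \<longleftrightarrow> is_profile N x \<and>
     (\<forall>i\<in>players N. \<forall>y. is_strategy y \<longrightarrow> payoff N r x i \<ge> payoff N r (x(i := y)) i - \<epsilon>)"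

fun normal_iter :: "nat \<Rightarrow> (nat set \<Rightarrow> nat \<Rightarrow> real) \<Rightarrow> nat \<Rightarrow> nat set" where
  "normal_iter N r 0 = players N"
| "normal_iter N r (Suc l) = {i \<in> normal_iter N r l. \<exists>j\<in>normal_iter N r l. j \<noteq> i \<and> r {j} i \<le> 0}"

definition normal_players :: "nat \<Rightarrow> (nat set \<Rightarrow> nat \<Rightarrow> real) \<Rightarrow> nat set" where
  "normal_players N r = (\<Inter>l. normal_iter N r l)"

end

theory Submission
  imports Defs
begin


definition okp :: "nat \<Rightarrow> (nat \<Rightarrow> nat \<Rightarrow> real) \<Rightarrow> bool" where
  "okp N z \<longleftrightarrow> (\<forall>l\<in>players N. \<forall>t. 0 \<le> z l t \<and> z l t \<le> 1)"

definition endp :: "nat \<Rightarrow> (nat \<Rightarrow> nat \<Rightarrow> real) \<Rightarrow> nat \<Rightarrow> real" where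
  "endp N z t = 1 - (\<Prod>l\<in>players N. 1 - z l t)"

definition gval :: "nat \<Rightarrow> (nat set \<Rightarrow> nat \<Rightarrow> real) \<Rightarrow> (nat \<Rightarrow> nat \<Rightarrow> real) \<Rightarrow> nat \<Rightarrow> nat \<Rightarrow> real" where
  "gval N r z m t = (\<Sum>S\<in>Pow (players N) - {{}}. quit_exactly N z S t * r S m)"

lemma fin_players[simp]: "finite (players N)"
  by (simp add: players_def)

lemma qe_nonneg:
  assumes "okp N z" "S \<subseteq> players N"
  shows "quit_exactly N z S t \<ge> 0"
  using assms unfolding quit_exactly_def okp_def
  by (intro mult_nonneg_nonneg prod_nonneg) (auto simp: subset_iff)

lemma sum_qe: "(\<Sum>S\<in>Pow (players N). quit_exactly N z S t) = 1"
proof -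
  have "(\<Prod>l\<in>players N. z l t + (1 - z l t)) = 1" by simp
  then show ?thesis unfolding quit_exactly_def
    using prod_add[of "players N" "\<lambda>l. z l t" "\<lambda>l. 1 - z l t"] by simp
qed

lemma endp_sum: "endp N z t = (\<Sum>S\<in>Pow (players N) - {{}}. quit_exactly N z S t)"
proof -
  have "(\<Sum>S\<in>Pow (players N). quit_exactly N z S t) =
        quit_exactly N z {} t + (\<Sum>S\<in>Pow (players N) - {{}}. quit_exactly N z S t)"
    by (rule sum.remove) auto
  then show ?thesis using sum_qe[of N z t] unfolding endp_def quit_exactly_def by simp
qed

lemma nq_Suc: "no_quit_before N z (Suc t) = no_quit_before N z t * (1 - endp N z t)"
  unfolding no_quit_before_def endp_def by simp

lemma prod_unit:
  assumes "okp N z"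
  shows "0 \<le> (\<Prod>l\<in>players N. 1 - z l t)" "(\<Prod>l\<in>players N. 1 - z l t) \<le> 1"
  using assms unfolding okp_def by (auto intro!: prod_nonneg prod_le_1)

lemma endp_unit:
  assumes "okp N z"
  shows "0 \<le> endp N z t" "endp N z t \<le> 1"
  using prod_unit[OF assms] unfolding endp_def by auto

lemma nq_unit:
  assumes "okp N z"
  shows "0 \<le> no_quit_before N z t" "no_quit_before N z t \<le> 1"
  using assms unfolding no_quit_before_def okp_def
  by (auto intro!: prod_nonneg prod_le_1)

lemma nq_sums:
  assumes "no_quit_before N z \<longlonglongrightarrow> 0"
  shows "(\<lambda>t. no_quit_before N z t * endp N z t) sums 1"
proof -
  have "(\<lambda>t. no_quit_before N z t - no_quit_before N z (Suc t)) sums (no_quit_before N z 0 - 0)"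
    by (rule telescope_sums'[OF assms])
  moreover have "no_quit_before N z 0 = 1" unfolding no_quit_before_def by simp
  ultimately show ?thesis by (simp add: nq_Suc algebra_simps)
qed

lemma abs_g:
  assumes "valid_game N r" "okp N z" "m \<in> players N"
  shows "\<bar>gval N r z m t\<bar> \<le> endp N z t"
proof -
  have "\<bar>gval N r z m t\<bar> \<le> (\<Sum>S\<in>Pow (players N) - {{}}. \<bar>quit_exactly N z S t * r S m\<bar>)"
    unfolding gval_def by (rule sum_abs)
  also have "\<dots> \<le> (\<Sum>S\<in>Pow (players N) - {{}}. quit_exactly N z S t)"
  proof (rule sum_mono)
    fix S assume S: "S \<in> Pow (players N) - {{}}"
    have q: "quit_exactly N z S t \<ge> 0" using qe_nonneg[OF assms(2)] S by auto
    have "\<bar>r S m\<bar> \<le> 1" using assms(1,3) S unfolding valid_game_def by auto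
    then show "\<bar>quit_exactly N z S t * r S m\<bar> \<le> quit_exactly N z S t"
      using q by (simp add: abs_mult mult_left_le)
  qed
  finally show ?thesis by (simp add: endp_sum)
qed

lemma payoff_eq:
  assumes "no_quit_before N z \<longlonglongrightarrow> 0"
  shows "payoff N r z m = (\<Sum>t. no_quit_before N z t * gval N r z m t)"
  using limI[OF assms] unfolding payoff_def gval_def by simp

lemma summ_g:
  assumes "valid_game N r" "okp N z" "m \<in> players N" "no_quit_before N z \<longlonglongrightarrow> 0"
  shows "summable (\<lambda>t. no_quit_before N z t * gval N r z m t)"
proof (rule summable_comparison_test)
  show "summable (\<lambda>t. no_quit_before N z t * endp N z t)"
    using nq_sums[OF assms(4)] by (simp add: sums_iff)
  show "\<exists>M. \<forall>n\<ge>M. norm (no_quit_before N z n * gval N r z m n) \<le> no_quit_before N z n * endp N z n"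
    using abs_g[OF assms(1-3)] nq_unit[OF assms(2)]
    by (auto simp: abs_mult intro!: mult_left_mono)
qed

lemma payoff_upper:
  assumes "valid_game N r" "okp N z" "m \<in> players N" "no_quit_before N z \<longlonglongrightarrow> 0"
    and "\<And>t. gval N r z m t \<le> C * endp N z t"
  shows "payoff N r z m \<le> C"
proof -
  have s: "(\<lambda>t. no_quit_before N z t * (C * endp N z t)) sums (C * 1)"
    using sums_mult[OF nq_sums[OF assms(4)], of C] by (simp add: algebra_simps)
  have "(\<Sum>t. no_quit_before N z t * gval N r z m t) \<le> (\<Sum>t. no_quit_before N z t * (C * endp N z t))"
    using summ_g[OF assms(1-4)] s assms(5) nq_unit[OF assms(2)]
    by (intro suminf_le) (auto simp: sums_iff intro!: mult_left_mono)
  then show ?thesis using s payoff_eq[OF assms(4)] by (simp add: sums_iff)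
qed

lemma payoff_lower:
  assumes "valid_game N r" "okp N z" "m \<in> players N" "no_quit_before N z \<longlonglongrightarrow> 0"
    and "\<And>t. gval N r z m t \<ge> C * endp N z t"
  shows "payoff N r z m \<ge> C"
proof -
  have s: "(\<lambda>t. no_quit_before N z t * (C * endp N z t)) sums (C * 1)"
    using sums_mult[OF nq_sums[OF assms(4)], of C] by (simp add: algebra_simps)
  have "(\<Sum>t. no_quit_before N z t * gval N r z m t) \<ge> (\<Sum>t. no_quit_before N z t * (C * endp N z t))"
    using summ_g[OF assms(1-4)] s assms(5) nq_unit[OF assms(2)]
    by (intro suminf_le) (auto simp: sums_iff intro!: mult_left_mono)
  then show ?thesis using s payoff_eq[OF assms(4)] by (simp add: sums_iff)
qed

lemma nq_tendsto:
  assumes "okp N z" "a \<in> players N" "c > 0" "\<And>t. z a t \<ge> c"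
  shows "no_quit_before N z \<longlonglongrightarrow> 0"
proof (rule tendsto_sandwich[of "\<lambda>_. 0" _ _ "\<lambda>t. (1 - c) ^ t"])
  show "\<forall>\<^sub>F n in sequentially. 0 \<le> no_quit_before N z n"
    using nq_unit[OF assms(1)] by simp
  have c1: "c \<le> 1" using assms unfolding okp_def by (meson order.trans)
  have "no_quit_before N z t \<le> (1 - c) ^ t" for t
  proof -
    have "(\<Prod>l\<in>players N. 1 - z l s) \<le> 1 - c" for s
    proof -
      have "(\<Prod>l\<in>players N. 1 - z l s) = (1 - z a s) * (\<Prod>l\<in>players N - {a}. 1 - z l s)"
        using assms(2) by (simp add: prod.remove)
      also have "\<dots> \<le> (1 - z a s) * 1"
        using assms unfolding okp_def by (intro mult_left_mono prod_le_1) auto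
      finally show ?thesis using assms(4)[of s] by simp
    qed
    then have "(\<Prod>s<t. \<Prod>l\<in>players N. 1 - z l s) \<le> (\<Prod>s<t. 1 - c)"
      using assms(1) unfolding okp_def by (intro prod_mono) (auto intro!: prod_nonneg)
    then show ?thesis unfolding no_quit_before_def by simp
  qed
  then show "\<forall>\<^sub>F n in sequentially. no_quit_before N z n \<le> (1 - c) ^ n" by simp
  show "(\<lambda>_. 0) \<longlonglongrightarrow> (0::real)" by simp
  show "(\<lambda>t. (1 - c) ^ t) \<longlonglongrightarrow> 0" using assms(3) c1 by (intro LIMSEQ_power_zero) auto
qed

lemma prod_red:
  fixes z :: "nat \<Rightarrow> nat \<Rightarrow> real"
  assumes "K \<subseteq> players N" "\<forall>l\<in>players N - K. z l t = 0"
  shows "(\<Prod>l\<in>players N - A. 1 - z l t) = (\<Prod>l\<in>K - A. 1 - z l t)"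
proof (rule prod.mono_neutral_right)
  show "\<forall>i\<in>players N - A - (K - A). 1 - z i t = 1"
  proof
    fix i assume "i \<in> players N - A - (K - A)"
    then have "i \<in> players N - K" by auto
    then show "1 - z i t = 1" using assms(2) by simp
  qed
qed (use assms in auto)

lemma endp_red:
  assumes "K \<subseteq> players N" "\<forall>l\<in>players N - K. z l t = 0"
  shows "endp N z t = 1 - (\<Prod>l\<in>K. 1 - z l t)"
  using prod_red[of K N z t "{}", OF assms] unfolding endp_def by simp

lemma qe1_red:
  assumes "K \<subseteq> players N" "\<forall>l\<in>players N - K. z l t = 0" "a \<in> players N"
  shows "quit_exactly N z {a} t = z a t * (\<Prod>l\<in>K - {a}. 1 - z l t)"
  using prod_red[of K N z t "{a}", OF assms(1,2)] unfolding quit_exactly_def by simp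

lemma g_upper:
  assumes "valid_game N r" "m \<in> players N" "a \<in> players N" "b \<in> players N" "a \<noteq> b"
    "okp N z"
  shows "gval N r z m t \<le> endp N z t - quit_exactly N z {a} t * (1 - r {a} m)
            - quit_exactly N z {b} t * (1 - r {b} m)"
proof -
  let ?A = "Pow (players N) - {{}}"
  let ?q = "\<lambda>S. quit_exactly N z S t"
  have "gval N r z m t \<le> (\<Sum>S\<in>?A. ?q S - (if S = {a} then ?q {a} * (1 - r {a} m) else 0)
          - (if S = {b} then ?q {b} * (1 - r {b} m) else 0))"
    unfolding gval_def
  proof (rule sum_mono)
    fix S assume S: "S \<in> ?A"
    have "r S m \<le> 1" using assms(1,2) S unfolding valid_game_def by (auto simp: abs_le_iff)
    moreover have "?q S \<ge> 0" using qe_nonneg[OF assms(6)] S by auto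
    ultimately have "?q S * r S m \<le> ?q S * 1" by (intro mult_left_mono)
    then show "?q S * r S m \<le> ?q S - (if S = {a} then ?q {a} * (1 - r {a} m) else 0)
          - (if S = {b} then ?q {b} * (1 - r {b} m) else 0)"
      using assms(5) by (cases "S = {a}"; cases "S = {b}") (auto simp: algebra_simps)
  qed
  also have "\<dots> = endp N z t - ?q {a} * (1 - r {a} m) - ?q {b} * (1 - r {b} m)"
    using assms(3,4) by (simp add: sum_subtractf endp_sum)
  finally show ?thesis .
qed

lemma g_lower:
  assumes "valid_game N r" "m \<in> players N" "a \<in> players N" "okp N z"
  shows "gval N r z m t \<ge> - endp N z t + quit_exactly N z {a} t * (1 + r {a} m)"
proof -
  let ?A = "Pow (players N) - {{}}"
  let ?q = "\<lambda>S. quit_exactly N z S t"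
  have "gval N r z m t \<ge> (\<Sum>S\<in>?A. - ?q S + (if S = {a} then ?q {a} * (1 + r {a} m) else 0))"
    unfolding gval_def
  proof (rule sum_mono)
    fix S assume S: "S \<in> ?A"
    have "r S m \<ge> -1" using assms(1,2) S unfolding valid_game_def by (auto simp: abs_le_iff)
    moreover have "?q S \<ge> 0" using qe_nonneg[OF assms(4)] S by auto
    ultimately have "?q S * r S m \<ge> ?q S * (-1)" by (intro mult_left_mono)
    then show "- ?q S + (if S = {a} then ?q {a} * (1 + r {a} m) else 0) \<le> ?q S * r S m"
      by (auto simp: algebra_simps)
  qed
  also have "(\<Sum>S\<in>?A. - ?q S + (if S = {a} then ?q {a} * (1 + r {a} m) else 0)) =
      - endp N z t + ?q {a} * (1 + r {a} m)"
    using assms(3) by (simp add: sum.distrib endp_sum sum_negf sum_subtractf)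
  finally show ?thesis .
qed



theorem lemma1:
  fixes N :: nat and r :: "nat set \<Rightarrow> nat \<Rightarrow> real"
  assumes "valid_game N r"
    and "\<forall>i\<in>players N. r {i} i = 0"
    and "\<exists>i\<in>normal_players N r. \<forall>k\<in>players N. r {i} k \<ge> 0"
  shows "\<forall>\<epsilon>>0. \<exists>x. stationary_profile N x \<and> eps_equilibrium N r \<epsilon> x"
proof (intro allI impI)
  fix \<epsilon> :: real assume ep: "\<epsilon> > 0"
  obtain i where iN: "i \<in> normal_players N r" and ri: "\<forall>k\<in>players N. r {i} k \<ge> 0"
    using assms(3) by blast
  have "i \<in> normal_iter N r (Suc 0)" using iN unfolding normal_players_def by blast
  then obtain j where iP: "i \<in> players N" and jP: "j \<in> players N" and ij: "j \<noteq> i"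
    and rji: "r {j} i \<le> 0" by auto
  define \<delta> :: real where "\<delta> = min (1/2) (\<epsilon>/2)"
  define \<eta> :: real where "\<eta> = \<delta> * min 1 \<epsilon> / 8"
  have d0: "0 < \<delta>" and d1: "\<delta> \<le> 1/2" and de: "\<delta> \<le> \<epsilon>/2" using ep by (auto simp: \<delta>_def)
  have e0: "0 < \<eta>" using d0 ep by (simp add: \<eta>_def)
  have ed: "\<eta> \<le> \<delta> / 8" using d0 by (simp add: \<eta>_def mult_left_le field_simps)
  have ede: "\<eta> / \<delta> \<le> \<epsilon> / 8" using d0 ep by (simp add: \<eta>_def field_simps mult_left_le)
  define x :: "nat \<Rightarrow> nat \<Rightarrow> real" where
    "x = (\<lambda>l t. if l = i then \<delta> else if l = j then \<eta> else 0)"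
  have rb: "\<And>S m. S \<subseteq> players N \<Longrightarrow> m \<in> players N \<Longrightarrow> -1 \<le> r S m \<and> r S m \<le> 1"
    using assms(1) unfolding valid_game_def by (auto simp: abs_le_iff)
  have okx: "okp N x" using d0 d1 e0 ed unfolding okp_def x_def by auto
  have nqx: "no_quit_before N x \<longlonglongrightarrow> 0"
    by (rule nq_tendsto[OF okx iP d0]) (simp add: x_def)
  have Kx: "{i, j} \<subseteq> players N" "\<forall>l\<in>players N - {i, j}. x l t = 0" for t
    using iP jP by (auto simp: x_def)
  have endx: "endp N x t = 1 - (1 - \<delta>) * (1 - \<eta>)" for t
    using endp_red[OF Kx] ij by (simp add: x_def)
  have qix: "quit_exactly N x {i} t = \<delta> * (1 - \<eta>)" for t
    using qe1_red[OF Kx iP] ij by (simp add: x_def insert_Diff_if)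
  have low: "payoff N r x m \<ge> r {i} m - 2 * \<eta> / \<delta>" if mP: "m \<in> players N" for m
  proof (rule payoff_lower[OF assms(1) okx mP nqx])
    fix t
    define D where "D = \<delta> + \<eta> - \<delta> * \<eta>"
    have eD: "endp N x t = D" by (simp add: endx D_def algebra_simps)
    have gl: "gval N r x m t \<ge> - D + \<delta> * (1 - \<eta>) * (1 + r {i} m)"
      using g_lower[OF assms(1) mP iP okx, of t] eD qix by simp
    have Dd: "D \<ge> \<delta>" using e0 d1 by (simp add: D_def mult_left_le_one_le) 
    have r1: "r {i} m \<le> 1" "r {i} m \<ge> 0" using rb[of "{i}" m] iP mP ri by auto
    have a1: "- D + \<delta> * (1 - \<eta>) * (1 + r {i} m) = r {i} m * D - \<eta> * (1 + r {i} m)"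
      by (simp add: D_def algebra_simps)
    have a2: "\<eta> * (1 + r {i} m) \<le> 2 * \<eta>" using r1 e0 by (simp add: mult_left_le)
    have a3: "2 * \<eta> = (2 * \<eta> / \<delta>) * \<delta>" using d0 by simp
    have a4: "(2 * \<eta> / \<delta>) * \<delta> \<le> (2 * \<eta> / \<delta>) * D" using Dd d0 e0 by (intro mult_left_mono) auto
    have a5: "(r {i} m - 2 * \<eta> / \<delta>) * D = r {i} m * D - (2 * \<eta> / \<delta>) * D"
      by (simp add: algebra_simps)
    have "- D + \<delta> * (1 - \<eta>) * (1 + r {i} m) \<ge> (r {i} m - 2 * \<eta> / \<delta>) * D"
      using a1 a2 a3 a4 a5 by linarith
    then show "(r {i} m - 2 * \<eta> / \<delta>) * endp N x t \<le> gval N r x m t" using gl eD by simp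
  qed
  have "stationary_profile N x" unfolding stationary_profile_def x_def by simp
  moreover have "eps_equilibrium N r \<epsilon> x"
    unfolding eps_equilibrium_def
  proof (intro conjI ballI allI impI)
    show "is_profile N x" using okx unfolding okp_def is_profile_def is_strategy_def by auto
    fix m y assume mP: "m \<in> players N" and ys: "is_strategy y"
    define z where "z = x(m := y)"
    have y01: "0 \<le> y t" "y t \<le> 1" for t using ys unfolding is_strategy_def by auto
    have okz: "okp N z" using okx y01 unfolding okp_def z_def by auto
    have rim: "r {i} m \<ge> 0" "r {i} m \<le> 1" using ri mP rb[of "{i}" m] iP by auto
    have up: "payoff N r z m \<le> r {i} m + \<delta> + \<eta> / \<delta>"
    proof (cases "m = i")
      case True
      have nqz: "no_quit_before N z \<longlonglongrightarrow> 0"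
        by (rule nq_tendsto[OF okz jP e0]) (use ij True in \<open>simp add: z_def x_def\<close>)
      have Kz: "{i, j} \<subseteq> players N" "\<forall>l\<in>players N - {i, j}. z l t = 0" for t
        using iP jP True by (auto simp: z_def x_def)
      have zi: "z i t = y t" "z j t = \<eta>" for t using True ij by (auto simp: z_def x_def)
      have "payoff N r z m \<le> \<eta>"
      proof (rule payoff_upper[OF assms(1) okz mP nqz])
        fix t
        have e: "endp N z t = 1 - (1 - y t) * (1 - \<eta>)"
          using endp_red[of "{i, j}" N z t, OF Kz(1) Kz(2)[of t]] ij by (simp add: zi)
        have qi: "quit_exactly N z {i} t = y t * (1 - \<eta>)"
          using qe1_red[of "{i, j}" N z t i, OF Kz(1) Kz(2)[of t] iP] ij by (simp add: zi insert_Diff_if)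
        have qj: "quit_exactly N z {j} t = \<eta> * (1 - y t)"
          using qe1_red[of "{i, j}" N z t j, OF Kz(1) Kz(2)[of t] jP] ij by (simp add: zi insert_Diff_if)
        have g: "gval N r z m t \<le> endp N z t - quit_exactly N z {i} t * (1 - r {i} m)
            - quit_exactly N z {j} t * (1 - r {j} m)"
          by (rule g_upper[OF assms(1) mP iP jP ij[symmetric] okz])
        have rii: "r {i} m = 0" using assms(2) iP True by simp
        have qjn: "quit_exactly N z {j} t * (1 - r {j} m) \<ge> quit_exactly N z {j} t"
        proof -
          have "quit_exactly N z {j} t \<ge> 0" using qj e0 y01[of t] by simp
          moreover have "1 - r {j} m \<ge> 1" using rji True by simp
          ultimately show ?thesis by (metis mult_left_mono mult.right_neutral)
        qed
        have "endp N z t - quit_exactly N z {i} t - quit_exactly N z {j} t = y t * \<eta>"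
          using e qi qj by (simp add: algebra_simps)
        moreover have "y t * \<eta> \<le> \<eta> * endp N z t"
        proof -
          have "\<eta> * y t \<le> \<eta> * 1" using e0 y01[of t] by (intro mult_left_mono) auto
          then have "y t \<le> endp N z t" using e by (simp add: algebra_simps)
          then show ?thesis using e0 by (simp add: mult.commute mult_left_mono)
        qed
        moreover have "quit_exactly N z {i} t * (1 - r {i} m) = quit_exactly N z {i} t" by (simp add: rii)
        ultimately show "gval N r z m t \<le> \<eta> * endp N z t" using g qjn by linarith
      qed
      moreover have "\<eta> \<le> \<eta> / \<delta>" using e0 d0 d1 by (simp add: field_simps)
      ultimately show ?thesis using rim d0 by linarith
    next
      case mi: False
      have nqz: "no_quit_before N z \<longlonglongrightarrow> 0"
        by (rule nq_tendsto[OF okz iP d0]) (use mi in \<open>simp add: z_def x_def\<close>)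
      show ?thesis
      proof (rule payoff_upper[OF assms(1) okz mP nqz])
        fix t
        define Y where "Y = y t"
        have Y: "0 \<le> Y" "Y \<le> 1" using y01 by (auto simp: Y_def)
        have g: "gval N r z m t \<le> endp N z t - quit_exactly N z {i} t * (1 - r {i} m)
            - quit_exactly N z {m} t * (1 - r {m} m)"
          by (rule g_upper[OF assms(1) mP iP mP mi[symmetric] okz])
        have rmm: "r {m} m = 0" using assms(2) mP by simp
        have zm: "z m t = Y" "z i t = \<delta>" using mi by (auto simp: z_def Y_def x_def)
        have key: "gval N r z m t \<le> \<eta> + \<delta> * Y + r {i} m * (\<delta> * (1 - Y))
                   \<and> endp N z t \<ge> \<delta> \<and> endp N z t \<ge> Y"
        proof (cases "m = j")
          case True
          have Kz: "{i, j} \<subseteq> players N" "\<forall>l\<in>players N - {i, j}. z l t = 0"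
            using iP jP True by (auto simp: z_def x_def)
          have zj: "z j t = Y" using zm True by simp
          have e: "endp N z t = 1 - (1 - \<delta>) * (1 - Y)"
            using endp_red[of "{i, j}" N z t, OF Kz] ij by (simp add: zm zj)
          have qi: "quit_exactly N z {i} t = \<delta> * (1 - Y)"
            using qe1_red[of "{i, j}" N z t i, OF Kz iP] ij by (simp add: zm zj insert_Diff_if)
          have qj: "quit_exactly N z {m} t = Y * (1 - \<delta>)"
            using qe1_red[of "{i, j}" N z t j, OF Kz jP] ij True by (simp add: zm zj insert_Diff_if)
          have "gval N r z m t \<le> \<delta> * Y + r {i} m * (\<delta> * (1 - Y))"
            using g rmm e qi qj by (simp add: algebra_simps)
          moreover have "endp N z t \<ge> \<delta>" "endp N z t \<ge> Y"
          proof -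
            have "Y * \<delta> \<le> Y" "Y * \<delta> \<le> \<delta>" using Y d0 d1 by (auto simp: mult_left_le mult_left_le_one_le)
            then show "endp N z t \<ge> \<delta>" "endp N z t \<ge> Y" using e by (simp_all add: algebra_simps)
          qed
          ultimately show ?thesis using e0 by linarith
        next
          case mj: False
          have Kz: "{i, j, m} \<subseteq> players N" "\<forall>l\<in>players N - {i, j, m}. z l t = 0"
            using iP jP mP by (auto simp: z_def x_def)
          have zj: "z j t = \<eta>" using mj ij by (simp add: z_def x_def)
          have e: "endp N z t = 1 - (1 - \<delta>) * (1 - \<eta>) * (1 - Y)"
            using endp_red[of "{i, j, m}" N z t, OF Kz] ij mi mj by (simp add: zm zj)
          have qi: "quit_exactly N z {i} t = \<delta> * ((1 - \<eta>) * (1 - Y))"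
            using qe1_red[of "{i, j, m}" N z t i, OF Kz iP] ij mi mj by (simp add: zm zj insert_Diff_if)
          have qm: "quit_exactly N z {m} t = Y * ((1 - \<delta>) * (1 - \<eta>))"
            using qe1_red[of "{i, j, m}" N z t m, OF Kz mP] ij mi mj by (simp add: zm zj insert_Diff_if)
          have g2: "gval N r z m t \<le> \<eta> + \<delta> * Y * (1 - \<eta>) + r {i} m * (\<delta> * (1 - Y)) * (1 - \<eta>)"
            using g rmm e qi qm by (simp add: algebra_simps)
          have h1: "\<delta> * Y * (1 - \<eta>) \<le> \<delta> * Y"
            using d0 Y e0 by (simp add: mult_left_le mult_nonneg_nonneg)
          have h2: "r {i} m * (\<delta> * (1 - Y)) * (1 - \<eta>) \<le> r {i} m * (\<delta> * (1 - Y))"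
            using d0 Y e0 rim by (intro mult_left_le) (auto intro: mult_nonneg_nonneg)
          have p1: "(1 - \<delta>) * (1 - \<eta>) * (1 - Y) \<le> 1 - \<delta>"
          proof -
            have "(1 - \<eta>) * (1 - Y) \<le> 1" using e0 ed d1 Y by (auto simp: mult_le_one)
            then have "(1 - \<delta>) * ((1 - \<eta>) * (1 - Y)) \<le> (1 - \<delta>) * 1"
              using d1 by (intro mult_left_mono) auto
            then show ?thesis by (simp add: mult.assoc)
          qed
          have p2: "(1 - \<delta>) * (1 - \<eta>) * (1 - Y) \<le> 1 - Y"
          proof -
            have "(1 - \<delta>) * (1 - \<eta>) \<le> 1" using e0 ed d1 d0 by (auto simp: mult_le_one)
            then have "((1 - \<delta>) * (1 - \<eta>)) * (1 - Y) \<le> 1 * (1 - Y)"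
              using Y by (intro mult_right_mono) auto
            then show ?thesis by simp
          qed
          show ?thesis using g2 h1 h2 e p1 p2 by linarith
        qed
        have k1: "\<eta> \<le> \<eta> / \<delta> * endp N z t"
        proof -
          have "\<eta> = \<eta> / \<delta> * \<delta>" using d0 by simp
          also have "\<dots> \<le> \<eta> / \<delta> * endp N z t" using key d0 e0 by (intro mult_left_mono) auto
          finally show ?thesis .
        qed
        have k2: "\<delta> * Y \<le> \<delta> * endp N z t" using key d0 by (intro mult_left_mono) auto
        have k3: "r {i} m * (\<delta> * (1 - Y)) \<le> r {i} m * endp N z t"
        proof -
          have "\<delta> * (1 - Y) \<le> \<delta> * 1" using Y d0 by (intro mult_left_mono) auto
          then show ?thesis using key rim by (intro mult_left_mono) auto
        qed
        have "(r {i} m + \<delta> + \<eta> / \<delta>) * endp N z t =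
              r {i} m * endp N z t + \<delta> * endp N z t + \<eta> / \<delta> * endp N z t"
          by (simp add: algebra_simps)
        then show "gval N r z m t \<le> (r {i} m + \<delta> + \<eta> / \<delta>) * endp N z t"
          using key k1 k2 k3 by linarith
      qed
    qed
    have lw: "payoff N r x m \<ge> r {i} m - 2 * \<eta> / \<delta>" by (rule low[OF mP])
    have "2 * \<eta> / \<delta> + \<eta> / \<delta> = 3 * (\<eta> / \<delta>)" by simp
    then have "2 * \<eta> / \<delta> + \<eta> / \<delta> \<le> \<epsilon> / 2" using ede ep by linarith
    then show "payoff N r (x(m := y)) m - \<epsilon> \<le> payoff N r x m"
      using up lw de unfolding z_def by linarith
  qed
  ultimately show "\<exists>x. stationary_profile N x \<and> eps_equilibrium N r \<epsilon> x" by blast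
qed
end
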